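(* Let $T$ be an $n$-simplex, $m\ge0$ and $k\ge 2m+1$. Then the sets $D(\texttt v,m)$, $\texttt v\in\Delta_0(T)$, and the sets $\mathbb T^\ell_{k,1}(f)\setminus D(\Delta_0(f),m)$, $f\in\Delta_\ell(T)$, $\ell=1,\dots,n$, are pairwise disjoint and their union is $\mathbb T^n_k$. Consequently $$\mathbb P_k(T)=\mathbb P_k(D(\Delta_0(T),m))\oplus\bigoplus_{\ell=1}^n\bigoplus_{f\in\Delta_\ell(T)}\mathbb P_k\big(\mathbb T^\ell_{k,1}(f)\setminus D(\Delta_0(f),m)\big).$$
   Context: $T$ has vertices $\texttt v_0,\dots,\texttt v_n$ and barycentric coordinates $\lambda_0,\dots,\lambda_n$. $\mathbb N$ includes $0$; $\mathbb T^n_k=\{\alpha\in\mathbb N^{n+1}:\sum_i\alpha_i=k\}$; $\lambda^\alpha=\prod_i\lambda_i^{\alpha_i}$; for $S\subseteq\mathbb T^n_k$, $\mathbb P_k(S)=\mathrm{span}\{\lambda^\alpha:\alpha\in S\}$. $\Delta_\ell(T)$ is the set of $\ell$-dimensional faces; a face $f$ is identified with its vertex index set $f\subseteq\{0,\dots,n\}$, $f^*$ is its complement, and $\Delta_0(f)$ is its set of vertices. $D(f,r)=\{\alpha\in\mathbb T^n_k:\sum_{i\in f^*}\alpha_i\le r\}$; for a set of vertices, $D(\Delta_0(f),m)=\bigcup_{\texttt v\in\Delta_0(f)}D(\texttt v,m)$. $\mathbb T^\ell_{k,1}(f)=\{\alpha\in\mathbb T^n_k:\alpha_i\ge1\ \forall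 i\in f,\ \alpha_i=0\ \forall i\in f^*\}$ (lattice nodes in the interior of $f$). *)

theory Defs
  imports Complex_Main
begin

text \<open>Multi-indices alpha in N^(n+1) are functions nat => nat vanishing beyond n.
  Faces of the n-simplex T are nonempty vertex index sets f, subsets of {0..n};
  an l-dimensional face has card f = l + 1.\<close>

definition multiidx :: "nat \<Rightarrow> nat \<Rightarrow> (nat \<Rightarrow> nat) set" where
  "multiidx n k = {\<alpha>. (\<forall>i>n. \<alpha> i = 0) \<and> (\<Sum>i\<le>n. \<alpha> i) = k}"

definition faces :: "nat \<Rightarrow> nat \<Rightarrow> nat set set" where
  "faces n l = {f. f \<subseteq> {..n} \<and> card f = l + 1}"

definition Dset :: "nat \<Rightarrow> nat \<Rightarrow> nat set \<Rightarrow> nat \<Rightarrow> (nat \<Rightarrow> nat) set" where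
  "Dset n k f r = {\<alpha> \<in> multiidx n k. (\<Sum>i\<in>{..n} - f. \<alpha> i) \<le> r}"

definition Dverts :: "nat \<Rightarrow> nat \<Rightarrow> nat set \<Rightarrow> nat \<Rightarrow> (nat \<Rightarrow> nat) set" where
  "Dverts n k f m = (\<Union>v\<in>f. Dset n k {v} m)"

definition Tint :: "nat \<Rightarrow> nat \<Rightarrow> nat set \<Rightarrow> (nat \<Rightarrow> nat) set" where
  "Tint n k f = {\<alpha> \<in> multiidx n k. (\<forall>i\<in>f. 1 \<le> \<alpha> i) \<and> (\<forall>i\<in>{..n} - f. \<alpha> i = 0)}"

text \<open>Points of T in barycentric coordinates (lambda_0..lambda_n), extended by 0.\<close>
definition bary :: "nat \<Rightarrow> (nat \<Rightarrow> real) set" where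
  "bary n = {x. (\<forall>i\<le>n. 0 \<le> x i) \<and> (\<forall>i>n. x i = 0) \<and> (\<Sum>i\<le>n. x i) = 1}"

definition bmono :: "nat \<Rightarrow> (nat \<Rightarrow> nat) \<Rightarrow> (nat \<Rightarrow> real) \<Rightarrow> real" where
  "bmono n \<alpha> = (\<lambda>x. if x \<in> bary n then (\<Prod>i\<le>n. x i ^ \<alpha> i) else 0)"

text \<open>P_k(S) = span of lambda^alpha, alpha in S (S is finite: a subset of T^n_k).\<close>
definition Pk :: "nat \<Rightarrow> (nat \<Rightarrow> nat) set \<Rightarrow> ((nat \<Rightarrow> real) \<Rightarrow> real) set" where
  "Pk n S = {(\<lambda>x. \<Sum>\<alpha>\<in>S. c \<alpha> * bmono n \<alpha> x) | c. True}"

end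

theory Submission imports Defs "HOL-Computational_Algebra.Polynomial" begin

lemma uni_indep:
  fixes a :: "'b \<Rightarrow> real"
  assumes "finite S" "\<forall>t>0. (\<Sum>\<alpha>\<in>S. a \<alpha> * t ^ e \<alpha>) = 0"
  shows "(\<Sum>\<alpha>\<in>{\<alpha>\<in>S. e \<alpha> = d}. a \<alpha>) = 0"
proof -
  define p where "p = (\<Sum>\<alpha>\<in>S. monom (a \<alpha>) (e \<alpha>))"
  have ev: "poly p t = (\<Sum>\<alpha>\<in>S. a \<alpha> * t ^ e \<alpha>)" for t
    unfolding p_def by (simp add: poly_sum poly_monom)
  have "{0<..} \<subseteq> {t. poly p t = 0}" using assms(2) ev by auto
  hence "\<not> finite {t. poly p t = 0}" using infinite_Ioi[where 'a=real] finite_subset by blast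
  hence "p = 0" using poly_roots_finite by blast
  hence "coeff p d = 0" by simp
  moreover have "coeff p d = (\<Sum>\<alpha>\<in>S. if e \<alpha> = d then a \<alpha> else 0)"
    unfolding p_def by (simp add: coeff_sum)
  moreover have "\<dots> = (\<Sum>\<alpha>\<in>{\<alpha>\<in>S. e \<alpha> = d}. a \<alpha>)"
    using assms(1) by (simp add: sum.inter_filter)
  ultimately show ?thesis by simp
qed

lemma multi_indep:
  fixes c :: "(nat \<Rightarrow> nat) \<Rightarrow> real"
  assumes "finite S" "\<forall>x. (\<forall>i<N. 0 < x i) \<longrightarrow> (\<Sum>\<alpha>\<in>S. c \<alpha> * (\<Prod>i<N. x i ^ \<alpha> i)) = 0"
  shows "(\<Sum>\<alpha>\<in>{\<alpha>\<in>S. \<forall>i<N. \<alpha> i = \<alpha>0 i}. c \<alpha>) = 0"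
  using assms
proof (induction N arbitrary: S)
  case 0
  then show ?case by simp
next
  case (Suc N)
  define S' where "S' = {\<alpha>\<in>S. \<alpha> N = \<alpha>0 N}"
  have fS': "finite S'" using Suc.prems(1) S'_def by simp
  have "\<forall>x. (\<forall>i<N. 0 < x i) \<longrightarrow> (\<Sum>\<alpha>\<in>S'. c \<alpha> * (\<Prod>i<N. x i ^ \<alpha> i)) = 0"
  proof (intro allI impI)
    fix x :: "nat \<Rightarrow> real" assume xp: "\<forall>i<N. 0 < x i"
    have "\<forall>t>0. (\<Sum>\<alpha>\<in>S. (c \<alpha> * (\<Prod>i<N. x i ^ \<alpha> i)) * t ^ \<alpha> N) = 0"
    proof (intro allI impI)
      fix t :: real assume tp: "t > 0"
      have "\<forall>i<Suc N. 0 < (x(N := t)) i" using xp tp by (simp add: less_Suc_eq)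
      hence "(\<Sum>\<alpha>\<in>S. c \<alpha> * (\<Prod>i<Suc N. (x(N := t)) i ^ \<alpha> i)) = 0" using Suc.prems(2) by blast
      moreover have "(\<Prod>i<Suc N. (x(N := t)) i ^ \<alpha> i) = (\<Prod>i<N. x i ^ \<alpha> i) * t ^ \<alpha> N" for \<alpha>
        by (simp add: prod.lessThan_Suc)
      ultimately show "(\<Sum>\<alpha>\<in>S. (c \<alpha> * (\<Prod>i<N. x i ^ \<alpha> i)) * t ^ \<alpha> N) = 0"
        by (simp add: mult.assoc)
    qed
    from uni_indep[OF Suc.prems(1) this, of "\<alpha>0 N"]
    show "(\<Sum>\<alpha>\<in>S'. c \<alpha> * (\<Prod>i<N. x i ^ \<alpha> i)) = 0" unfolding S'_def .
  qed
  from Suc.IH[OF fS' this]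
  have "(\<Sum>\<alpha>\<in>{\<alpha> \<in> S'. \<forall>i<N. \<alpha> i = \<alpha>0 i}. c \<alpha>) = 0" .
  moreover have "{\<alpha> \<in> S'. \<forall>i<N. \<alpha> i = \<alpha>0 i} = {\<alpha>\<in>S. \<forall>i<Suc N. \<alpha> i = \<alpha>0 i}"
    unfolding S'_def by (auto simp: less_Suc_eq)
  ultimately show ?case by simp
qed

lemma finite_multiidx: "finite (multiidx n k)"
proof -
  have "multiidx n k \<subseteq> {f. \<forall>x. (x \<in> {..n} \<longrightarrow> f x \<in> {..k}) \<and> (x \<notin> {..n} \<longrightarrow> f x = 0)}"
  proof
    fix f assume f: "f \<in> multiidx n k"
    { fix x assume "x \<le> n"
      hence "f x \<le> (\<Sum>i\<le>n. f i)" by (intro member_le_sum) auto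
      hence "f x \<le> k" using f by (simp add: multiidx_def) }
    thus "f \<in> {f. \<forall>x. (x \<in> {..n} \<longrightarrow> f x \<in> {..k}) \<and> (x \<notin> {..n} \<longrightarrow> f x = 0)}"
      using f by (auto simp: multiidx_def)
  qed
  thus ?thesis using finite_set_of_finite_funs[of "{..n}" "{..k}" 0] finite_subset by blast
qed

lemma bmono_indep:
  assumes "\<forall>x. (\<Sum>\<alpha>\<in>multiidx n k. c \<alpha> * bmono n \<alpha> x) = 0" "\<beta> \<in> multiidx n k"
  shows "c \<beta> = 0"
proof -
  have "\<forall>y. (\<forall>i<Suc n. 0 < y i) \<longrightarrow> (\<Sum>\<alpha>\<in>multiidx n k. c \<alpha> * (\<Prod>i<Suc n. y i ^ \<alpha> i)) = 0"
  proof (intro allI impI)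
    fix y :: "nat \<Rightarrow> real" assume yp: "\<forall>i<Suc n. 0 < y i"
    define s where "s = (\<Sum>i\<le>n. y i)"
    have sp: "s > 0" unfolding s_def using yp by (intro sum_pos) auto
    define x where "x = (\<lambda>i. if i \<le> n then y i / s else 0)"
    have "(\<Sum>i\<le>n. x i) = (\<Sum>i\<le>n. y i / s)" unfolding x_def by simp
    also have "\<dots> = 1" using sp by (simp add: sum_divide_distrib[symmetric] s_def)
    finally have xb: "x \<in> bary n" unfolding bary_def x_def using yp sp by (auto intro!: divide_nonneg_pos less_imp_le)
    have key: "bmono n \<alpha> x = (\<Prod>i<Suc n. y i ^ \<alpha> i) / s ^ k" if "\<alpha> \<in> multiidx n k" for \<alpha>
    proof -
      have "bmono n \<alpha> x = (\<Prod>i\<le>n. (y i / s) ^ \<alpha> i)" using xb unfolding bmono_def x_def by simp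
      also have "\<dots> = (\<Prod>i\<le>n. y i ^ \<alpha> i) / (\<Prod>i\<le>n. s ^ \<alpha> i)"
        by (simp add: power_divide prod_dividef)
      also have "(\<Prod>i\<le>n. s ^ \<alpha> i) = s ^ k" using that by (simp add: power_sum[symmetric] multiidx_def del: power_sum)
      finally show ?thesis by (simp add: lessThan_Suc_atMost)
    qed
    have "0 = (\<Sum>\<alpha>\<in>multiidx n k. c \<alpha> * bmono n \<alpha> x)" using assms(1) by simp
    also have "\<dots> = (\<Sum>\<alpha>\<in>multiidx n k. c \<alpha> * (\<Prod>i<Suc n. y i ^ \<alpha> i) / s ^ k)"
      by (intro sum.cong refl) (simp add: key)
    also have "\<dots> = (\<Sum>\<alpha>\<in>multiidx n k. c \<alpha> * (\<Prod>i<Suc n. y i ^ \<alpha> i)) / s ^ k"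
      by (simp add: sum_divide_distrib)
    finally show "(\<Sum>\<alpha>\<in>multiidx n k. c \<alpha> * (\<Prod>i<Suc n. y i ^ \<alpha> i)) = 0" using sp by simp
  qed
  from multi_indep[OF finite_multiidx this, of \<beta>]
  have "(\<Sum>\<alpha>\<in>{\<alpha>\<in>multiidx n k. \<forall>i<Suc n. \<alpha> i = \<beta> i}. c \<alpha>) = 0" .
  moreover have "{\<alpha>\<in>multiidx n k. \<forall>i<Suc n. \<alpha> i = \<beta> i} = {\<beta>}"
  proof safe
    fix \<alpha> assume "\<alpha> \<in> multiidx n k" "\<forall>i<Suc n. \<alpha> i = \<beta> i"
    thus "\<alpha> = \<beta>" using assms(2) unfolding multiidx_def
      by (intro ext, case_tac "x \<le> n") auto
  qed (use assms(2) in auto)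
  ultimately show ?thesis by simp
qed


lemma decomp_coeffs:
  assumes fJ: "finite J" and fB: "\<forall>j\<in>J. finite (B j)"
    and dis: "\<forall>i\<in>J. \<forall>j\<in>J. i \<noteq> j \<longrightarrow> B i \<inter> B j = {}"
    and un: "(\<Union>j\<in>J. B j) = M"
    and p: "\<forall>j\<in>J. p j \<in> Pk n (B j)"
  shows "\<exists>c. (\<forall>j\<in>J. p j = (\<lambda>x. \<Sum>\<alpha>\<in>B j. c \<alpha> * bmono n \<alpha> x))
            \<and> (\<lambda>x. \<Sum>j\<in>J. p j x) = (\<lambda>x. \<Sum>\<alpha>\<in>M. c \<alpha> * bmono n \<alpha> x)"
proof -
  from p have "\<forall>j\<in>J. \<exists>C. p j = (\<lambda>x. \<Sum>\<alpha>\<in>B j. C \<alpha> * bmono n \<alpha> x)"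
    unfolding Pk_def by blast
  then obtain C where C: "\<forall>j\<in>J. p j = (\<lambda>x. \<Sum>\<alpha>\<in>B j. C j \<alpha> * bmono n \<alpha> x)"
    by metis
  define c where "c \<alpha> = (\<Sum>j\<in>J. if \<alpha> \<in> B j then C j \<alpha> else 0)" for \<alpha>
  have cj: "c \<alpha> = C j \<alpha>" if "j \<in> J" "\<alpha> \<in> B j" for j \<alpha>
  proof -
    have "c \<alpha> = (\<Sum>j'\<in>J. if j' = j then C j \<alpha> else 0)"
      unfolding c_def using dis that by (intro sum.cong refl) auto
    also have "\<dots> = C j \<alpha>" using fJ that by simp
    finally show ?thesis .
  qed
  have pj: "\<forall>j\<in>J. p j = (\<lambda>x. \<Sum>\<alpha>\<in>B j. c \<alpha> * bmono n \<alpha> x)"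
    using C cj by simp
  have "(\<Sum>j\<in>J. p j x) = (\<Sum>\<alpha>\<in>M. c \<alpha> * bmono n \<alpha> x)" for x
  proof -
    have "(\<Sum>j\<in>J. p j x) = (\<Sum>j\<in>J. \<Sum>\<alpha>\<in>B j. c \<alpha> * bmono n \<alpha> x)" using pj by simp
    also have "\<dots> = (\<Sum>\<alpha>\<in>(\<Union>j\<in>J. B j). c \<alpha> * bmono n \<alpha> x)"
      by (rule sum.UNION_disjoint[symmetric]) (use fJ fB dis in auto)
    finally show ?thesis using un by simp
  qed
  thus ?thesis using pj by blast
qed

lemma decomp_span:
  assumes fJ: "finite J" and fB: "\<forall>j\<in>J. finite (B j)"
    and dis: "\<forall>i\<in>J. \<forall>j\<in>J. i \<noteq> j \<longrightarrow> B i \<inter> B j = {}"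
    and un: "(\<Union>j\<in>J. B j) = M"
  shows "Pk n M = {(\<lambda>x. \<Sum>j\<in>J. p j x) | p. \<forall>j\<in>J. p j \<in> Pk n (B j)}"
proof
  show "Pk n M \<subseteq> {(\<lambda>x. \<Sum>j\<in>J. p j x) | p. \<forall>j\<in>J. p j \<in> Pk n (B j)}"
  proof
    fix q assume "q \<in> Pk n M"
    then obtain c where q: "q = (\<lambda>x. \<Sum>\<alpha>\<in>M. c \<alpha> * bmono n \<alpha> x)" unfolding Pk_def by blast
    define p where "p j = (\<lambda>x. \<Sum>\<alpha>\<in>B j. c \<alpha> * bmono n \<alpha> x)" for j
    have "\<forall>j\<in>J. p j \<in> Pk n (B j)" unfolding p_def Pk_def by blast
    moreover have "q = (\<lambda>x. \<Sum>j\<in>J. p j x)"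
    proof
      fix x
      have "(\<Sum>j\<in>J. p j x) = (\<Sum>\<alpha>\<in>(\<Union>j\<in>J. B j). c \<alpha> * bmono n \<alpha> x)"
        unfolding p_def by (rule sum.UNION_disjoint[symmetric]) (use fJ fB dis in auto)
      thus "q x = (\<Sum>j\<in>J. p j x)" using un q by simp
    qed
    ultimately show "q \<in> {(\<lambda>x. \<Sum>j\<in>J. p j x) | p. \<forall>j\<in>J. p j \<in> Pk n (B j)}" by blast
  qed
next
  show "{(\<lambda>x. \<Sum>j\<in>J. p j x) | p. \<forall>j\<in>J. p j \<in> Pk n (B j)} \<subseteq> Pk n M"
  proof
    fix q assume "q \<in> {(\<lambda>x. \<Sum>j\<in>J. p j x) | p. \<forall>j\<in>J. p j \<in> Pk n (B j)}"
    then obtain p where q: "q = (\<lambda>x. \<Sum>j\<in>J. p j x)" and p: "\<forall>j\<in>J. p j \<in> Pk n (B j)" by blast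
    from decomp_coeffs[OF fJ fB dis un p] q show "q \<in> Pk n M" unfolding Pk_def by auto
  qed
qed

lemma decomp_indep:
  assumes fJ: "finite J" and fB: "\<forall>j\<in>J. finite (B j)"
    and dis: "\<forall>i\<in>J. \<forall>j\<in>J. i \<noteq> j \<longrightarrow> B i \<inter> B j = {}"
    and un: "(\<Union>j\<in>J. B j) = multiidx n k"
  shows "\<forall>p. (\<forall>j\<in>J. p j \<in> Pk n (B j)) \<and> (\<lambda>x. \<Sum>j\<in>J. p j x) = (\<lambda>x. 0)
              \<longrightarrow> (\<forall>j\<in>J. p j = (\<lambda>x. 0))"
proof (intro allI impI)
  fix p assume h: "(\<forall>j\<in>J. p j \<in> Pk n (B j)) \<and> (\<lambda>x. \<Sum>j\<in>J. p j x) = (\<lambda>x. 0)"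
  from decomp_coeffs[OF fJ fB dis un conjunct1[OF h]] obtain c where
    pj: "\<forall>j\<in>J. p j = (\<lambda>x. \<Sum>\<alpha>\<in>B j. c \<alpha> * bmono n \<alpha> x)"
    and s: "(\<lambda>x. \<Sum>j\<in>J. p j x) = (\<lambda>x. \<Sum>\<alpha>\<in>multiidx n k. c \<alpha> * bmono n \<alpha> x)" by blast
  have "\<forall>x. (\<Sum>\<alpha>\<in>multiidx n k. c \<alpha> * bmono n \<alpha> x) = 0" using s h by metis
  hence c0: "c \<alpha> = 0" if "\<alpha> \<in> multiidx n k" for \<alpha> using bmono_indep that by blast
  show "\<forall>j\<in>J. p j = (\<lambda>x. 0)"
  proof
    fix j assume j: "j \<in> J"
    hence "\<forall>\<alpha>\<in>B j. c \<alpha> = 0" using c0 un by blast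
    thus "p j = (\<lambda>x. 0)" using pj j by simp
  qed
qed


lemma D_iff:
  assumes "v \<le> n"
  shows "\<alpha> \<in> Dset n k {v} m \<longleftrightarrow> \<alpha> \<in> multiidx n k \<and> k \<le> \<alpha> v + m"
proof (cases "\<alpha> \<in> multiidx n k")
  case True
  have "(\<Sum>i\<le>n. \<alpha> i) = \<alpha> v + (\<Sum>i\<in>{..n} - {v}. \<alpha> i)"
    using assms by (subst sum.remove[of _ v]) auto
  hence "(\<Sum>i\<in>{..n} - {v}. \<alpha> i) = k - \<alpha> v" "\<alpha> v \<le> k" using True by (auto simp: multiidx_def)
  thus ?thesis using True unfolding Dset_def by auto
next
  case False
  thus ?thesis unfolding Dset_def by auto
qed

lemma DD_disj:
  assumes "v \<noteq> w" "v \<le> n" "w \<le> n" "2 * m + 1 \<le> k"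
  shows "Dset n k {v} m \<inter> Dset n k {w} m = {}"
proof (rule ccontr)
  assume "Dset n k {v} m \<inter> Dset n k {w} m \<noteq> {}"
  then obtain \<alpha> where a: "\<alpha> \<in> multiidx n k" "k \<le> \<alpha> v + m" "k \<le> \<alpha> w + m"
    using D_iff assms by blast
  have "(\<Sum>i\<in>{v,w}. \<alpha> i) \<le> (\<Sum>i\<le>n. \<alpha> i)" using assms by (intro sum_mono2) auto
  hence "\<alpha> v + \<alpha> w \<le> k" using a assms by (simp add: multiidx_def)
  thus False using a assms by linarith
qed

lemma DT_disj:
  assumes "v \<le> n" "v \<notin> f" "2 * m + 1 \<le> k"
  shows "Dset n k {v} m \<inter> Tint n k f = {}"
  using assms D_iff[OF assms(1)] unfolding Tint_def by auto

lemma TT_disj: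
  assumes "f \<subseteq> {..n}" "g \<subseteq> {..n}" "f \<noteq> g"
  shows "Tint n k f \<inter> Tint n k g = {}"
proof (rule ccontr)
  assume "Tint n k f \<inter> Tint n k g \<noteq> {}"
  then obtain \<alpha> where a: "\<alpha> \<in> Tint n k f" "\<alpha> \<in> Tint n k g" by blast
  obtain i where "i \<in> f \<and> i \<notin> g \<or> i \<in> g \<and> i \<notin> f" using assms(3) by blast
  thus False using a assms(1,2) unfolding Tint_def by fastforce
qed

lemma card1E: "card f = 1 \<Longrightarrow> \<exists>v. f = {v}"
  using card_1_singletonE by metis

theorem mainTheorem12:
  fixes n m k :: nat
  assumes hk: "k \<ge> 2 * m + 1"
  defines "A \<equiv> (\<lambda>f. if card f = 1 then Dset n k f m else Tint n k f - Dverts n k f m)"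
    and "F \<equiv> (\<Union>l\<in>{0..n}. faces n l)"
    and "J \<equiv> insert None (Some ` (\<Union>l\<in>{1..n}. faces n l))"
    and "B \<equiv> (\<lambda>j. case j of None \<Rightarrow> Dverts n k {..n} m
                        | Some f \<Rightarrow> Tint n k f - Dverts n k f m)"
  shows "(\<forall>f\<in>F. \<forall>g\<in>F. f \<noteq> g \<longrightarrow> A f \<inter> A g = {})
       \<and> (\<Union>f\<in>F. A f) = multiidx n k
       \<and> Pk n (multiidx n k) = {(\<lambda>x. \<Sum>j\<in>J. p j x) | p. \<forall>j\<in>J. p j \<in> Pk n (B j)}
       \<and> (\<forall>p. (\<forall>j\<in>J. p j \<in> Pk n (B j)) \<and> (\<lambda>x. \<Sum>j\<in>J. p j x) = (\<lambda>x. 0)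
              \<longrightarrow> (\<forall>j\<in>J. p j = (\<lambda>x. 0)))"
proof -
  define G where "G = (\<Union>l\<in>{1..n}. faces n l)"
  define M where "M = multiidx n k"
  have cardle: "card f \<le> Suc n" if "f \<subseteq> {..n}" for f
    using card_mono[OF _ that] by simp
  have Fiff: "f \<in> F \<longleftrightarrow> f \<subseteq> {..n} \<and> 1 \<le> card f" for f
  proof
    assume "f \<in> F" thus "f \<subseteq> {..n} \<and> 1 \<le> card f" unfolding F_def faces_def by auto
  next
    assume h: "f \<subseteq> {..n} \<and> 1 \<le> card f"
    hence "f \<in> faces n (card f - 1)" "card f - 1 \<in> {0..n}" using cardle[of f] unfolding faces_def by auto
    thus "f \<in> F" unfolding F_def by blast
  qed
  have Giff: "f \<in> G \<longleftrightarrow> f \<subseteq> {..n} \<and> 2 \<le> card f" for f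
  proof
    assume "f \<in> G" thus "f \<subseteq> {..n} \<and> 2 \<le> card f" unfolding G_def faces_def by auto
  next
    assume h: "f \<subseteq> {..n} \<and> 2 \<le> card f"
    hence "f \<in> faces n (card f - 1)" "card f - 1 \<in> {1..n}" using cardle[of f] unfolding faces_def by auto
    thus "f \<in> G" unfolding G_def by blast
  qed
  have finf: "finite f" if "f \<subseteq> {..n}" for f using that finite_subset by blast
  have AM: "A f \<subseteq> M" for f unfolding A_def M_def Dset_def Tint_def by auto
  have P1: "\<forall>f\<in>F. \<forall>g\<in>F. f \<noteq> g \<longrightarrow> A f \<inter> A g = {}"
  proof (intro ballI impI)
    fix f g assume f: "f \<in> F" and g: "g \<in> F" and fg: "f \<noteq> g"
    have fs: "f \<subseteq> {..n}" and gs: "g \<subseteq> {..n}" using f g Fiff by auto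
    have side: "A f \<inter> A g = {}" if "card f = 1" "f \<in> F" "g \<in> F" "f \<noteq> g" for f g
    proof -
      have fs: "f \<subseteq> {..n}" and gs: "g \<subseteq> {..n}" using that Fiff by auto
      obtain v where v: "f = {v}" using card1E \<open>card f = 1\<close> by blast
      have vn: "v \<le> n" using fs v by auto
      show ?thesis
      proof (cases "card g = 1")
        case True
        then obtain w where w: "g = {w}" using card1E by blast
        thus ?thesis using DD_disj[of v w n m k] v w vn gs hk that unfolding A_def by auto
      next
        case False
        show ?thesis
        proof (cases "v \<in> g")
          case True
          thus ?thesis using v False that unfolding A_def Dverts_def by auto
        next
          case False2: False
          thus ?thesis using v False DT_disj[OF vn False2 hk] that unfolding A_def by auto
        qed
      qed
    qed
    show "A f \<inter> A g = {}"
    proof (cases "card f = 1")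
      case True thus ?thesis using side f g fg by blast
    next
      case False
      show ?thesis
      proof (cases "card g = 1")
        case True thus ?thesis using side[of g f] f g fg by blast
      next
        case False2: False
        thus ?thesis using False TT_disj[OF fs gs fg, of k] unfolding A_def by auto
      qed
    qed
  qed
  have P2: "(\<Union>f\<in>F. A f) = M"
  proof
    show "(\<Union>f\<in>F. A f) \<subseteq> M" using AM by blast
  next
    show "M \<subseteq> (\<Union>f\<in>F. A f)"
    proof
      fix \<alpha> assume aM: "\<alpha> \<in> M"
      show "\<alpha> \<in> (\<Union>f\<in>F. A f)"
      proof (cases "\<exists>v\<le>n. \<alpha> \<in> Dset n k {v} m")
        case True
        then obtain v where "v \<le> n" "\<alpha> \<in> Dset n k {v} m" by blast
        moreover have "{v} \<in> F" using \<open>v \<le> n\<close> Fiff by auto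
        ultimately show ?thesis unfolding A_def by force
      next
        case False
        define f where "f = {i. i \<le> n \<and> \<alpha> i \<noteq> 0}"
        have fs: "f \<subseteq> {..n}" unfolding f_def by auto
        have sumf: "(\<Sum>i\<le>n. \<alpha> i) = (\<Sum>i\<in>f. \<alpha> i)"
          unfolding f_def by (rule sum.mono_neutral_right) auto
        have ak: "(\<Sum>i\<le>n. \<alpha> i) = k" using aM unfolding M_def multiidx_def by auto
        have "f \<noteq> {}" using sumf ak hk by auto
        hence c1: "1 \<le> card f" using finf[OF fs] by (simp add: Suc_le_eq card_gt_0_iff)
        have aT: "\<alpha> \<in> Tint n k f" using aM unfolding Tint_def M_def f_def by auto
        have c2: "card f \<noteq> 1"
        proof
          assume "card f = 1"
          then obtain v where v: "f = {v}" using card1E by blast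
          hence "\<alpha> v = k" using sumf ak by simp
          moreover have "v \<le> n" using v fs by auto
          ultimately show False using False D_iff[of v n \<alpha> k m] aM unfolding M_def by auto
        qed
        have "\<alpha> \<notin> Dverts n k f m" using False fs unfolding Dverts_def by auto
        hence "\<alpha> \<in> A f" using aT c2 unfolding A_def by auto
        moreover have "f \<in> F" using Fiff fs c1 by auto
        ultimately show ?thesis by blast
      qed
    qed
  qed
  have fJ: "finite J"
  proof -
    have "G \<subseteq> Pow {..n}" using Giff by auto
    hence "finite G" using finite_subset by blast
    thus ?thesis unfolding J_def G_def[symmetric] by simp
  qed
  have BM: "B j \<subseteq> M" for j
    unfolding B_def M_def Dverts_def Dset_def Tint_def by (cases j) auto
  have fB: "\<forall>j\<in>J. finite (B j)"
    using BM finite_multiidx finite_subset unfolding M_def by blast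
  have dis: "\<forall>i\<in>J. \<forall>j\<in>J. i \<noteq> j \<longrightarrow> B i \<inter> B j = {}"
  proof -
    have nb: "B None \<inter> B (Some g) = {}" if "g \<in> G" for g
    proof -
      have gs: "g \<subseteq> {..n}" using that Giff by auto
      { fix \<alpha> assume a: "\<alpha> \<in> B None" "\<alpha> \<in> B (Some g)"
        then obtain v where v: "v \<le> n" "\<alpha> \<in> Dset n k {v} m" unfolding B_def Dverts_def by auto
        have False
        proof (cases "v \<in> g")
          case True thus False using a v unfolding B_def Dverts_def by auto
        next
          case False thus False using DT_disj[OF v(1) False hk] a v unfolding B_def by auto
        qed }
      thus ?thesis by blast
    qed
    show ?thesis
    proof (intro ballI impI)
      fix i j assume i: "i \<in> J" and j: "j \<in> J" and ij: "i \<noteq> j"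
      show "B i \<inter> B j = {}"
      proof (cases i)
        case None
        then obtain g where "j = Some g" "g \<in> G" using j ij unfolding J_def G_def by auto
        thus ?thesis using nb None by auto
      next
        case (Some f)
        hence f: "f \<in> G" using i unfolding J_def G_def by auto
        show ?thesis
        proof (cases j)
          case None thus ?thesis using nb[OF f] Some by auto
        next
          case (Some g)
          hence "g \<in> G" "f \<noteq> g" using j ij \<open>i = Some f\<close> unfolding J_def G_def by auto
          thus ?thesis using TT_disj[of f n g k] f Giff Some \<open>i = Some f\<close> unfolding B_def by auto
        qed
      qed
    qed
  qed
  have un: "(\<Union>j\<in>J. B j) = M"
  proof
    show "(\<Union>j\<in>J. B j) \<subseteq> M" using BM by blast
  next
    show "M \<subseteq> (\<Union>j\<in>J. B j)"
    proof
      fix \<alpha> assume "\<alpha> \<in> M"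
      then obtain f where f: "f \<in> F" "\<alpha> \<in> A f" using P2 by blast
      show "\<alpha> \<in> (\<Union>j\<in>J. B j)"
      proof (cases "card f = 1")
        case True
        then obtain v where v: "f = {v}" using card1E by blast
        hence "\<alpha> \<in> B None" using f Fiff unfolding A_def B_def Dverts_def by auto
        thus ?thesis unfolding J_def by blast
      next
        case False
        hence "f \<in> G" using f Fiff Giff by auto
        moreover have "\<alpha> \<in> B (Some f)" using f False unfolding A_def B_def by auto
        ultimately show ?thesis unfolding J_def G_def by blast
      qed
    qed
  qed
  show ?thesis
    using P1 P2 decomp_span[OF fJ fB dis un, of n] decomp_indep[OF fJ fB dis un[unfolded M_def]]
    unfolding M_def by blast
qed

end
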